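(* Let $n\ge3$ and let $\Gamma$ be a $\mathbb{D}_n$-symmetric billiard curve. Let $H=\langle\rho,\sigma\rangle\subset\mathbb{D}_n$ be a dihedral subgroup of order $2N$ with $N\ge3$, generated by a rotation $\rho$ of order $N$ and a reflection $\sigma$. Let $z\in\Gamma^{\mathbb{Z}}$ be a billiard sequence of minimal period $p\ge3$ with spatiotemporal symmetry group $H(z)=H$. Then: - $p$ is an integer multiple of $N$; - there is a unique $1\le M\le N-1$ with $\gcd(M,N)=1$ such that $\rho^M(z_i)=z_{p/N+i}$ for all $i$; - there is a unique $0\le k<p$ such that $\sigma(z_i)=z_{k-i}$ for all $i$.
   Context: $\mathbb{D}_n=\langle R,S\rangle$, where $R$ is rotation by $2\pi/n$ and $S$ is the horizontal reflection. A $\mathbb{D}_n$-symmetric billiard curve is a $C^2$ simple closed $\mathbb{D}_n$-invariant curve bounding a strictly convex domain. A billiard sequence is $z\in\Gamma^{\mathbb{Z}}$ with $z_i\ne z_{i+1}$. The spatiotemporal symmetry group $H(z)$ is the set of $h\in\mathbb{D}_n$ for which there is $k\in\mathbb{Z}$ with $h(z_i)=z_{k+i}$ for all $i$ (time-preserving) or $h(z_i)=z_{k-i}$ for all $i$ (time-reversing). *)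

theory Defs
  imports "HOL-Analysis.Analysis"
begin

text \<open>Group of maps generated by a set of maps (closure under composition, containing id).
  For generators of finite order this is the generated group.\<close>
inductive_set gen_maps :: "('a \<Rightarrow> 'a) set \<Rightarrow> ('a \<Rightarrow> 'a) set" for G where
  gen_id: "id \<in> gen_maps G"
| gen_comp: "g \<in> G \<Longrightarrow> f \<in> gen_maps G \<Longrightarrow> g \<circ> f \<in> gen_maps G"

definition rotR :: "nat \<Rightarrow> complex \<Rightarrow> complex" where
  "rotR n = (\<lambda>z. cis (2 * pi / real n) * z)"

definition reflS :: "complex \<Rightarrow> complex" where
  "reflS = cnj"

definition Dn :: "nat \<Rightarrow> (complex \<Rightarrow> complex) set" where
  "Dn n = gen_maps {rotR n, reflS}"

definition is_rotation :: "(complex \<Rightarrow> complex) \<Rightarrow> bool" where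
  "is_rotation f \<longleftrightarrow> (\<exists>\<theta>. f = (\<lambda>z. cis \<theta> * z))"

definition is_reflection :: "(complex \<Rightarrow> complex) \<Rightarrow> bool" where
  "is_reflection f \<longleftrightarrow> (\<exists>\<theta>. f = (\<lambda>z. cis \<theta> * cnj z))"

definition C2_simple_closed_curve :: "complex set \<Rightarrow> bool" where
  "C2_simple_closed_curve \<Gamma> \<longleftrightarrow>
     (\<exists>\<gamma> \<gamma>' \<gamma>''. (\<forall>t. \<gamma> (t + 1) = \<gamma> t)
        \<and> (\<forall>t. (\<gamma> has_vector_derivative \<gamma>' t) (at t))
        \<and> (\<forall>t. (\<gamma>' has_vector_derivative \<gamma>'' t) (at t))
        \<and> continuous_on UNIV \<gamma>''
        \<and> (\<forall>t. \<gamma>' t \<noteq> 0)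
        \<and> inj_on \<gamma> {0..<1}
        \<and> \<Gamma> = \<gamma> ` {0..1})"

definition bounds_strictly_convex_domain :: "complex set \<Rightarrow> bool" where
  "bounds_strictly_convex_domain \<Gamma> \<longleftrightarrow>
     (\<exists>K. open K \<and> bounded K \<and> K \<noteq> {} \<and> convex K \<and> frontier K = \<Gamma>
        \<and> (\<forall>x\<in>closure K. \<forall>y\<in>closure K. x \<noteq> y \<longrightarrow> open_segment x y \<subseteq> K))"

definition Dn_billiard_curve :: "nat \<Rightarrow> complex set \<Rightarrow> bool" where
  "Dn_billiard_curve n \<Gamma> \<longleftrightarrow> C2_simple_closed_curve \<Gamma> \<and> bounds_strictly_convex_domain \<Gamma>
     \<and> (\<forall>g\<in>Dn n. g ` \<Gamma> = \<Gamma>)"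

definition billiard_sequence :: "complex set \<Rightarrow> (int \<Rightarrow> complex) \<Rightarrow> bool" where
  "billiard_sequence \<Gamma> z \<longleftrightarrow> (\<forall>i. z i \<in> \<Gamma>) \<and> (\<forall>i. z i \<noteq> z (i + 1))"

definition minimal_period :: "(int \<Rightarrow> 'a) \<Rightarrow> nat \<Rightarrow> bool" where
  "minimal_period z p \<longleftrightarrow> p > 0 \<and> (\<forall>i. z (i + int p) = z i)
     \<and> (\<forall>q. 0 < q \<and> q < p \<longrightarrow> \<not> (\<forall>i. z (i + int q) = z i))"

definition st_symmetry_group :: "nat \<Rightarrow> (int \<Rightarrow> complex) \<Rightarrow> (complex \<Rightarrow> complex) set" where
  "st_symmetry_group n z = {h \<in> Dn n. \<exists>k::int.
      (\<forall>i. h (z i) = z (k + i)) \<or> (\<forall>i. h (z i) = z (k - i))}"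

end

theory Submission
  imports Defs
begin

lemma cis_cnj_one: "cis t * cnj (cis t) = (1::complex)"
  by (metis complex_norm_square norm_cis power_one of_real_1)

lemma per_nat:
  assumes "minimal_period z p"
  shows "z (i + int p * int m) = z i"
proof (induction m arbitrary: i)
  case 0 then show ?case by simp
next
  case (Suc m)
  have "z (i + int p * int (Suc m)) = z ((i + int p) + int p * int m)"
    by (simp add: algebra_simps)
  also have "\<dots> = z (i + int p)" by (rule Suc.IH)
  also have "\<dots> = z i" using assms unfolding minimal_period_def by blast
  finally show ?case .
qed

lemma per_mult:
  assumes "minimal_period z p"
  shows "z (i + int p * m) = z i"
proof (cases "m \<ge> 0")
  case True
  then obtain m' where "m = int m'" by (metis nonneg_int_cases)
  then show ?thesis using per_nat[OF assms] by simp
next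
  case False
  define m' where "m' = nat (- m)"
  have m: "m = - int m'" using False unfolding m'_def by simp
  have "z ((i + int p * m) + int p * int m') = z (i + int p * m)" by (rule per_nat[OF assms])
  then show ?thesis using m by simp
qed

lemma per_shift:
  assumes "minimal_period z p" "int p dvd (d - d')"
  shows "z (d + i) = z (d' + i)"
proof -
  obtain m where "d - d' = int p * m" using assms(2) by blast
  then have eq: "d + i = (d' + i) + int p * m" by simp
  have "z ((d' + i) + int p * m) = z (d' + i)" by (rule per_mult[OF assms(1)])
  then show ?thesis by (simp only: eq)
qed

lemma per_dvd:
  assumes "minimal_period z p" "\<forall>i. z (i + d) = z i"
  shows "int p dvd d"
proof -
  have pp: "p > 0" using assms(1) unfolding minimal_period_def by simp
  define r where "r = d mod int p"
  have r: "0 \<le> r" "r < int p" using pp unfolding r_def by auto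
  have "\<forall>i. z (i + int (nat r)) = z i"
  proof
    fix i
    have "z (r + i) = z (d + i)"
      by (rule per_shift[OF assms(1)]) (simp add: r_def mod_eq_0_iff_dvd[symmetric] mod_diff_left_eq)
    moreover have "z (i + int (nat r)) = z (r + i)" using r by (simp add: add.commute)
    moreover have "z (d + i) = z i" using assms(2) by (metis add.commute)
    ultimately show "z (i + int (nat r)) = z i" by simp
  qed
  then have "\<not> (0 < nat r \<and> nat r < p)" using assms(1) unfolding minimal_period_def by blast
  then have "r = 0" using r by auto
  then show ?thesis unfolding r_def by auto
qed

lemma dvd_range_eq:
  fixes a b P :: int
  assumes "P dvd (a - b)" "0 \<le> a" "a < P" "0 \<le> b" "b < P"
  shows "a = b"
proof -
  obtain m where m: "a - b = P * m" using assms(1) by blast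
  have "m = 0"
  proof (rule ccontr)
    assume "m \<noteq> 0"
    then have "m \<ge> 1 \<or> m \<le> -1" by linarith
    then show False
    proof
      assume "m \<ge> 1" then have "P * m \<ge> P" using assms by (simp add: mult_le_cancel_left1)
      then show False using m assms by linarith
    next
      assume "m \<le> -1" then have "P * m \<le> P * (-1)" using assms
        by (intro mult_left_mono) auto
      then show False using m assms by linarith
    qed
  qed
  then show ?thesis using m by simp
qed

theorem mainTheorem9:
  fixes n N p :: nat and \<Gamma> :: "complex set" and \<rho> \<sigma> :: "complex \<Rightarrow> complex"
    and z :: "int \<Rightarrow> complex"
  assumes "n \<ge> 3"
    and "Dn_billiard_curve n \<Gamma>"
    and "N \<ge> 3"
    and "\<rho> \<in> Dn n" and "is_rotation \<rho>"
    and "\<rho> ^^ N = id" and "\<forall>j. 0 < j \<and> j < N \<longrightarrow> \<rho> ^^ j \<noteq> id"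
    and "\<sigma> \<in> Dn n" and "is_reflection \<sigma>"
    and "card (gen_maps {\<rho>, \<sigma>}) = 2 * N"
    and "billiard_sequence \<Gamma> z"
    and "minimal_period z p" and "p \<ge> 3"
    and "st_symmetry_group n z = gen_maps {\<rho>, \<sigma>}"
  shows "N dvd p
    \<and> (\<exists>!M::nat. 1 \<le> M \<and> M \<le> N - 1 \<and> coprime M N
          \<and> (\<forall>i. (\<rho> ^^ M) (z i) = z (int (p div N) + i)))
    \<and> (\<exists>!k::int. 0 \<le> k \<and> k < int p \<and> (\<forall>i. \<sigma> (z i) = z (k - i)))"
proof -
  note mp = assms(12)
  have pp: "p > 0" using mp unfolding minimal_period_def by simp
  obtain \<theta> where rho: "\<rho> = (\<lambda>w. cis \<theta> * w)" using assms(5) unfolding is_rotation_def by blast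
  obtain \<phi> where sig: "\<sigma> = (\<lambda>w. cis \<phi> * cnj w)" using assms(9) unfolding is_reflection_def by blast
  define c where "c = cis \<theta>"
  have cc: "c * cnj c = 1" unfolding c_def by (rule cis_cnj_one)
  have ss: "cis \<phi> * cnj (cis \<phi>) = 1" by (rule cis_cnj_one)
  have powr: "\<rho> ^^ j = (\<lambda>w. c ^ j * w)" for j
    by (induction j) (auto simp: rho c_def)
  have z01: "z 0 \<noteq> z 1" using assms(11) unfolding billiard_sequence_def by (metis add_0)
  have cne: "c ^ j \<noteq> 1" if "0 < j" "j < N" for j
  proof
    assume "c ^ j = 1"
    then have "\<rho> ^^ j = id" using powr[of j] by (simp add: id_def)
    then show False using assms(7) that by blast
  qed
  have nofix: False if "c ^ j \<noteq> 1" "\<forall>i. c ^ j * z i = z i" for j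
  proof -
    have "z i = 0" for i
    proof -
      have "c ^ j * z i = z i" using that(2) by blast
      then have "(c ^ j - 1) * z i = 0" by (simp add: left_diff_distrib)
      then show ?thesis using that(1) by (metis mult_eq_0_iff right_minus_eq)
    qed
    then show False using z01 by simp
  qed
  have H: "h \<in> st_symmetry_group n z" if "h \<in> {\<rho>, \<sigma>}" for h
  proof -
    have "h \<circ> id \<in> gen_maps {\<rho>, \<sigma>}" using that by (intro gen_maps.gen_comp gen_maps.gen_id)
    then show ?thesis using assms(14) by simp
  qed
  obtain ka where ka: "(\<forall>i. \<rho> (z i) = z (ka + i)) \<or> (\<forall>i. \<rho> (z i) = z (ka - i))"
    using H[of \<rho>] unfolding st_symmetry_group_def by auto
  have rpres: "\<forall>i. \<rho> (z i) = z (ka + i)"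
  proof (rule ccontr)
    assume "\<not> ?thesis"
    then have rev: "\<forall>i. \<rho> (z i) = z (ka - i)" using ka by blast
    have "\<forall>i. c ^ 2 * z i = z i"
    proof
      fix i
      have "c ^ 2 * z i = \<rho> (\<rho> (z i))" by (simp add: rho c_def power2_eq_square)
      also have "\<dots> = z i" using rev by simp
      finally show "c ^ 2 * z i = z i" .
    qed
    then show False using nofix cne[of 2] assms(3) by auto
  qed
  define a where "a = ka"
  have iter: "(\<rho> ^^ j) (z i) = z (int j * a + i)" for j i
  proof (induction j)
    case 0 then show ?case by simp
  next
    case (Suc j)
    have "(\<rho> ^^ Suc j) (z i) = \<rho> ((\<rho> ^^ j) (z i))" by simp
    also have "\<dots> = z (a + (int j * a + i))" using Suc rpres a_def by simp
    finally show ?case by (simp add: algebra_simps)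
  qed
  have A: "int p dvd int N * a"
  proof (rule per_dvd[OF mp], rule allI)
    fix i show "z (i + int N * a) = z i" using iter[of N i] assms(6) by (simp add: add.commute)
  qed
  have B: "\<not> int p dvd int j * a" if "0 < j" "j < N" for j
  proof
    assume "int p dvd int j * a"
    then have "\<forall>i. c ^ j * z i = z i"
      using per_shift[OF mp, of "int j * a" 0] iter[of j] powr[of j] by simp
    then show False using nofix cne that by blast
  qed
  define g where "g = gcd a (int p)"
  have gpos: "g > 0" using pp unfolding g_def by simp
  define a' where "a' = a div g"
  define d where "d = int p div g"
  have aa: "a = g * a'" unfolding a'_def g_def by simp
  have pd: "int p = g * d" unfolding d_def g_def by simp
  have cop: "coprime a' d" unfolding a'_def d_def g_def
    using pp by (intro div_gcd_coprime) simp
  have dpos: "d > 0" using pd gpos pp zero_less_mult_pos by (metis of_nat_0_less_iff)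
  have key: "int p dvd j * a \<longleftrightarrow> d dvd j" for j
  proof -
    have "int p dvd j * a \<longleftrightarrow> g * d dvd g * (j * a')" using aa pd by (simp add: algebra_simps)
    also have "\<dots> \<longleftrightarrow> d dvd j * a'" using gpos by simp
    also have "\<dots> \<longleftrightarrow> d dvd j" using cop by (simp add: coprime_commute coprime_dvd_mult_left_iff)
    finally show ?thesis .
  qed
  have dN: "d dvd int N" using A key by blast
  have "d \<ge> int N"
  proof (rule ccontr)
    assume "\<not> d \<ge> int N"
    then have "0 < nat d" "nat d < N" using dpos by auto
    then have "\<not> int p dvd int (nat d) * a" using B by blast
    then show False using key dpos by simp
  qed
  moreover have "d \<le> int N" using dN assms(3) by (simp add: zdvd_imp_le)
  ultimately have dN': "d = int N" by simp
  have pgN: "int p = g * int N" using pd dN' by simp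
  have Ndvd: "N dvd p"
  proof -
    have "int N dvd int p" using pgN by simp
    then show ?thesis by simp
  qed
  have pdivN: "int (p div N) = g"
  proof -
    have "int (p div N) = int p div int N" by (simp add: zdiv_int)
    also have "\<dots> = g" using pgN assms(3) by simp
    finally show ?thesis .
  qed
  have copN: "coprime a' (int N)" using cop dN' by simp
  have Mchar: "(\<forall>i. (\<rho> ^^ M) (z i) = z (int (p div N) + i)) \<longleftrightarrow> int p dvd int M * a - g" for M
  proof
    assume h: "\<forall>i. (\<rho> ^^ M) (z i) = z (int (p div N) + i)"
    show "int p dvd int M * a - g"
    proof (rule per_dvd[OF mp], rule allI)
      fix i
      have "z (int M * a + (i - g)) = z (g + (i - g))" using h iter[of M "i - g"] pdivN by simp
      then show "z (i + (int M * a - g)) = z i" by (simp add: algebra_simps)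
    qed
  next
    assume "int p dvd int M * a - g"
    then show "\<forall>i. (\<rho> ^^ M) (z i) = z (int (p div N) + i)"
      using per_shift[OF mp] iter pdivN by simp
  qed
  have Mex: "\<exists>M::nat. 1 \<le> M \<and> M \<le> N - 1 \<and> coprime M N
          \<and> (\<forall>i. (\<rho> ^^ M) (z i) = z (int (p div N) + i))"
  proof -
    obtain u v where uv: "u * a' + v * int N = 1" using bezout_int[of a' "int N"] copN by auto
    define M where "M = nat (u mod int N)"
    have NM: "int M = u mod int N" unfolding M_def using assms(3) by simp
    have Mlt: "int M < int N" using NM assms(3) by simp
    define q where "q = u div int N"
    have ueq: "u = int M + int N * q" using NM unfolding q_def by simp
    have eq1: "int M * a' + int N * (v + q * a') = 1" using uv unfolding ueq by (simp add: algebra_simps)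
    have M1: "1 \<le> M"
    proof (rule ccontr)
      assume "\<not> 1 \<le> M" then have "M = 0" by simp
      then have "int N dvd 1" using eq1 by (metis dvd_triv_left mult_zero_left add_0 of_nat_0)
      then show False using assms(3) by simp
    qed
    have cM: "coprime M N"
    proof -
      have "coprime (int M) (int N)"
      proof (rule coprimeI)
        fix e assume "e dvd int M" "e dvd int N"
        then have "e dvd int M * a' + int N * (v + q * a')" by simp
        then show "is_unit e" using eq1 by simp
      qed
      then show ?thesis by simp
    qed
    define X where "X = v + q * a'"
    have e: "int M * a' - 1 = int N * (- X)" using eq1 unfolding X_def[symmetric] by simp
    have "int M * a - g = g * (int M * a' - 1)" using aa by (simp add: algebra_simps)
    also have "\<dots> = g * int N * (- X)" using e by simp
    finally have "int M * a - g = g * int N * (- X)" .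
    then have "int p dvd int M * a - g" using pgN by simp
    then show ?thesis using M1 Mlt cM Mchar by (intro exI[of _ M]) auto
  qed
  have Muniq: "M1 = M2" if "1 \<le> M1" "M1 \<le> N - 1" "int p dvd int M1 * a - g"
                           "1 \<le> M2" "M2 \<le> N - 1" "int p dvd int M2 * a - g" for M1 M2
  proof -
    have "int p dvd (int M1 - int M2) * a"
      using dvd_diff[OF that(3) that(6)] by (simp add: algebra_simps)
    then have "int N dvd int M1 - int M2" using key dN' by simp
    then have "int M1 = int M2" by (rule dvd_range_eq) (use that assms(3) in auto)
    then show ?thesis by simp
  qed
  have Mpart: "\<exists>!M::nat. 1 \<le> M \<and> M \<le> N - 1 \<and> coprime M N
          \<and> (\<forall>i. (\<rho> ^^ M) (z i) = z (int (p div N) + i))"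
    using Mex Muniq Mchar by (metis (no_types, lifting))
  obtain kb where kb: "(\<forall>i. \<sigma> (z i) = z (kb + i)) \<or> (\<forall>i. \<sigma> (z i) = z (kb - i))"
    using H[of \<sigma>] unfolding st_symmetry_group_def by auto
  have srev: "\<forall>i. \<sigma> (z i) = z (kb - i)"
  proof (rule ccontr)
    assume "\<not> ?thesis"
    then have pres: "\<forall>i. \<sigma> (z i) = z (kb + i)" using kb by blast
    have s2: "\<sigma> (\<sigma> w) = w" for w
    proof -
      have "\<sigma> (\<sigma> w) = (cis \<phi> * cnj (cis \<phi>)) * w" by (simp add: sig)
      then show ?thesis using ss by simp
    qed
    have rs: "\<rho> (\<sigma> (\<rho> (\<sigma> w))) = w" for w
    proof -
      have "\<rho> (\<sigma> (\<rho> (\<sigma> w))) = (c * cnj c) * (cis \<phi> * cnj (cis \<phi>)) * w"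
        by (simp add: sig rho c_def)
      then show ?thesis using ss cc by simp
    qed
    have d1: "int p dvd 2 * kb"
    proof (rule per_dvd[OF mp], rule allI)
      fix i show "z (i + 2 * kb) = z i" using s2[of "z i"] pres by (simp add: algebra_simps)
    qed
    have d2: "int p dvd 2 * a + 2 * kb"
    proof (rule per_dvd[OF mp], rule allI)
      fix i show "z (i + (2 * a + 2 * kb)) = z i" using rs[of "z i"] pres rpres a_def
        by (simp add: algebra_simps)
    qed
    have "int p dvd int 2 * a" using dvd_diff[OF d2 d1] by simp
    then show False using B[of 2] assms(3) by simp
  qed
  have Kpart: "\<exists>!k::int. 0 \<le> k \<and> k < int p \<and> (\<forall>i. \<sigma> (z i) = z (k - i))"
  proof
    show "0 \<le> kb mod int p \<and> kb mod int p < int p \<and> (\<forall>i. \<sigma> (z i) = z (kb mod int p - i))"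
    proof (intro conjI allI)
      show "0 \<le> kb mod int p" "kb mod int p < int p" using pp by auto
      fix i
      have "z (kb + - i) = z (kb mod int p + - i)"
        by (rule per_shift[OF mp]) (simp add: mod_eq_0_iff_dvd[symmetric] mod_diff_right_eq)
      then show "\<sigma> (z i) = z (kb mod int p - i)" using srev by simp
    qed
  next
    fix k assume k: "0 \<le> k \<and> k < int p \<and> (\<forall>i. \<sigma> (z i) = z (k - i))"
    have "\<forall>i. \<sigma> (z i) = z (kb mod int p - i)"
    proof
      fix i
      have "z (kb + - i) = z (kb mod int p + - i)"
        by (rule per_shift[OF mp]) (simp add: mod_eq_0_iff_dvd[symmetric] mod_diff_right_eq)
      then show "\<sigma> (z i) = z (kb mod int p - i)" using srev by simp
    qed
    then have "\<forall>i. z (k - i) = z (kb mod int p - i)" using k by simp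
    then have "int p dvd k - kb mod int p"
    proof (intro per_dvd[OF mp] allI)
      fix i assume h: "\<forall>i. z (k - i) = z (kb mod int p - i)"
      have e: "i + (k - kb mod int p) = k - (kb mod int p - i)" by simp
      have "z (k - (kb mod int p - i)) = z (kb mod int p - (kb mod int p - i))" by (rule h[rule_format])
      also have "kb mod int p - (kb mod int p - i) = i" by simp
      finally show "z (i + (k - kb mod int p)) = z i" by (simp only: e)
    qed
    then show "k = kb mod int p" by (rule dvd_range_eq) (use k pp in auto)
  qed
  show ?thesis using Ndvd Mpart Kpart by blast
qed

end
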